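(* Let $n\in\mathbb N$, let $\mathcal H$ be a Hilbert space, and let $\phi:M_n(\mathbb C)\to B(\mathcal H)$ be a positive linear map. Then the restriction $\phi_0$ of $\phi$ to the operator system $C(S^1)^{(n)}$ of $n\times n$ Toeplitz matrices is completely positive, i.e. for every $p\in\mathbb N$ and every positive semidefinite $p\times p$ block matrix $[x_{ij}]$ with all $x_{ij}\in C(S^1)^{(n)}$, the operator matrix $[\phi(x_{ij})]$ is positive on $\mathcal H^p$.
   Context: $C(S^1)^{(n)}\subseteq M_n(\mathbb C)$ denotes the set of complex Toeplitz matrices $[\tau_{k-\ell}]_{k,\ell=0}^{n-1}$. A linear map is positive if it maps positive semidefinite matrices to positive operators. *)

theory Defs
  imports "HOL-Analysis.Analysis" "Jordan_Normal_Form.Matrix"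
begin

class chilbert = banach +
  fixes scaleC :: "complex \<Rightarrow> 'a \<Rightarrow> 'a" (infixr "*\<^sub>C" 75)
    and cinner :: "'a \<Rightarrow> 'a \<Rightarrow> complex"
  assumes scaleC_add_right: "a *\<^sub>C (x + y) = a *\<^sub>C x + a *\<^sub>C y"
    and scaleC_add_left: "(a + b) *\<^sub>C x = a *\<^sub>C x + b *\<^sub>C x"
    and scaleC_scaleC: "a *\<^sub>C (b *\<^sub>C x) = (a * b) *\<^sub>C x"
    and scaleC_one: "1 *\<^sub>C x = x"
    and scaleC_of_real: "complex_of_real r *\<^sub>C x = r *\<^sub>R x"
    and cinner_cnj: "cinner y x = cnj (cinner x y)"
    and cinner_add_right: "cinner x (y + z) = cinner x y + cinner x z"
    and cinner_scaleC_right: "cinner x (a *\<^sub>C y) = a * cinner x y"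
    and cinner_self_nonneg: "Im (cinner x x) = 0 \<and> Re (cinner x x) \<ge> 0"
    and norm_cinner: "norm x = sqrt (Re (cinner x x))"

definition bounded_op :: "('a::chilbert \<Rightarrow> 'a) \<Rightarrow> bool" where
  "bounded_op T \<longleftrightarrow> (\<forall>x y. T (x + y) = T x + T y) \<and> (\<forall>a x. T (a *\<^sub>C x) = a *\<^sub>C T x)
     \<and> (\<exists>K. \<forall>x. norm (T x) \<le> norm x * K)"

definition positive_op :: "('a::chilbert \<Rightarrow> 'a) \<Rightarrow> bool" where
  "positive_op T \<longleftrightarrow> (\<forall>x. Im (cinner x (T x)) = 0 \<and> Re (cinner x (T x)) \<ge> 0)"

definition psd_mat :: "nat \<Rightarrow> complex mat \<Rightarrow> bool" where
  "psd_mat m A \<longleftrightarrow> A \<in> carrier_mat m m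
     \<and> (\<forall>k<m. \<forall>l<m. A $$ (l, k) = cnj (A $$ (k, l)))
     \<and> (\<forall>v :: nat \<Rightarrow> complex.
          Im (\<Sum>k<m. \<Sum>l<m. cnj (v k) * A $$ (k, l) * v l) = 0
        \<and> Re (\<Sum>k<m. \<Sum>l<m. cnj (v k) * A $$ (k, l) * v l) \<ge> 0)"

definition toeplitz_mat :: "nat \<Rightarrow> complex mat \<Rightarrow> bool" where
  "toeplitz_mat n A \<longleftrightarrow> A \<in> carrier_mat n n
     \<and> (\<exists>\<tau> :: int \<Rightarrow> complex. \<forall>k<n. \<forall>l<n. A $$ (k, l) = \<tau> (int k - int l))"

definition block_mat :: "nat \<Rightarrow> nat \<Rightarrow> (nat \<Rightarrow> nat \<Rightarrow> complex mat) \<Rightarrow> complex mat" where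
  "block_mat p n X = mat (p * n) (p * n) (\<lambda>(a, b). X (a div n) (b div n) $$ (a mod n, b mod n))"

definition linear_map_to_BH :: "nat \<Rightarrow> (complex mat \<Rightarrow> 'a::chilbert \<Rightarrow> 'a) \<Rightarrow> bool" where
  "linear_map_to_BH n \<phi> \<longleftrightarrow>
     (\<forall>X \<in> carrier_mat n n. bounded_op (\<phi> X))
   \<and> (\<forall>X \<in> carrier_mat n n. \<forall>Y \<in> carrier_mat n n. \<phi> (X + Y) = (\<lambda>h. \<phi> X h + \<phi> Y h))
   \<and> (\<forall>X \<in> carrier_mat n n. \<forall>a. \<phi> (a \<cdot>\<^sub>m X) = (\<lambda>h. a *\<^sub>C \<phi> X h))"

definition positive_map :: "nat \<Rightarrow> (complex mat \<Rightarrow> 'a::chilbert \<Rightarrow> 'a) \<Rightarrow> bool" where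
  "positive_map n \<phi> \<longleftrightarrow> (\<forall>X. psd_mat n X \<longrightarrow> positive_op (\<phi> X))"

end

theory Submission
  imports Defs "Jordan_Normal_Form.Spectral_Radius"
begin

unbundle no vec_syntax

definition ip :: "nat \<Rightarrow> (nat \<Rightarrow> complex) \<Rightarrow> (nat \<Rightarrow> complex) \<Rightarrow> complex" where
  "ip M x y = (\<Sum>r<M. cnj (x r) * y r)"

lemma ip_cong: "(\<And>r. r < M \<Longrightarrow> x r = x' r) \<Longrightarrow> (\<And>r. r < M \<Longrightarrow> y r = y' r) \<Longrightarrow> ip M x y = ip M x' y'"
  unfolding ip_def by (rule sum.cong) auto

lemma ip_cnj: "cnj (ip M x y) = ip M y x"
  unfolding ip_def by (simp add: mult.commute)

lemma ip_scale_right: "ip M x (\<lambda>r. c * y r) = c * ip M x y"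
  unfolding ip_def by (simp add: sum_distrib_left algebra_simps)

lemma ip_scale_left: "ip M (\<lambda>r. c * x r) y = cnj c * ip M x y"
  unfolding ip_def by (simp add: sum_distrib_left algebra_simps)

lemma ip_diff_left: "ip M (\<lambda>r. x r - z r) y = ip M x y - ip M z y"
  unfolding ip_def by (simp add: sum_subtractf algebra_simps)

lemma ip_Suc: "ip (Suc M) x y = ip M x y + cnj (x M) * y M"
  unfolding ip_def by simp

lemma cnj_self: "cnj z * z = of_real ((cmod z)\<^sup>2)"
  by (metis complex_norm_square mult.commute)

lemma ip_self: "ip M x x = of_real (\<Sum>r<M. (cmod (x r))\<^sup>2)"
  unfolding ip_def of_real_sum cnj_self by simp

lemma sum_cnj_self_zero:
  assumes "finite S" "(\<Sum>s\<in>S. cnj (z s) * z s) = 0" "s \<in> S"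
  shows "z s = 0"
proof -
  have "(\<Sum>s\<in>S. cnj (z s) * z s) = of_real (\<Sum>s\<in>S. (cmod (z s))\<^sup>2)"
    unfolding of_real_sum cnj_self by simp
  with assms(2) have "(\<Sum>s\<in>S. (cmod (z s))\<^sup>2) = 0" by (metis of_real_eq_0_iff)
  with assms(1,3) have "(cmod (z s))\<^sup>2 = 0"
    using sum_nonneg_eq_0_iff[of S "\<lambda>s. (cmod (z s))\<^sup>2"] by auto
  then show ?thesis by simp
qed

lemma ip_self_zero: "ip M x x = 0 \<Longrightarrow> r < M \<Longrightarrow> x r = 0"
  unfolding ip_def using sum_cnj_self_zero[of "{..<M}" x r] by auto

lemma ip_expand:
  assumes "finite S" "finite T"
  shows "ip M (\<lambda>r. \<Sum>s\<in>S. a s * x s r) (\<lambda>r. \<Sum>t\<in>T. b t * y t r)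
       = (\<Sum>s\<in>S. \<Sum>t\<in>T. cnj (a s) * b t * ip M (x s) (y t))"
proof -
  have "ip M (\<lambda>r. \<Sum>s\<in>S. a s * x s r) (\<lambda>r. \<Sum>t\<in>T. b t * y t r)
      = (\<Sum>r<M. \<Sum>s\<in>S. \<Sum>t\<in>T. cnj (a s) * b t * (cnj (x s r) * y t r))"
    unfolding ip_def by (simp add: sum_distrib_left sum_distrib_right algebra_simps)
  also have "\<dots> = (\<Sum>s\<in>S. \<Sum>r<M. \<Sum>t\<in>T. cnj (a s) * b t * (cnj (x s r) * y t r))"
    by (rule sum.swap)
  also have "\<dots> = (\<Sum>s\<in>S. \<Sum>t\<in>T. \<Sum>r<M. cnj (a s) * b t * (cnj (x s r) * y t r))"
    by (rule sum.cong[OF refl], rule sum.swap)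
  also have "\<dots> = (\<Sum>s\<in>S. \<Sum>t\<in>T. cnj (a s) * b t * ip M (x s) (y t))"
    unfolding ip_def by (simp add: sum_distrib_left)
  finally show ?thesis .
qed

lemma ip_expand_left:
  assumes "finite S"
  shows "ip M (\<lambda>r. \<Sum>s\<in>S. a s * x s r) y = (\<Sum>s\<in>S. cnj (a s) * ip M (x s) y)"
proof -
  have "ip M (\<lambda>r. \<Sum>s\<in>S. a s * x s r) y = (\<Sum>r<M. \<Sum>s\<in>S. cnj (a s) * (cnj (x s r) * y r))"
    unfolding ip_def by (simp add: sum_distrib_left sum_distrib_right algebra_simps)
  also have "\<dots> = (\<Sum>s\<in>S. \<Sum>r<M. cnj (a s) * (cnj (x s r) * y r))" by (rule sum.swap)
  also have "\<dots> = (\<Sum>s\<in>S. cnj (a s) * ip M (x s) y)"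
    unfolding ip_def by (simp add: sum_distrib_left)
  finally show ?thesis .
qed

lemma transfer_rel:
  assumes fin: "finite S"
    and gram: "\<And>s t. s \<in> S \<Longrightarrow> t \<in> S \<Longrightarrow> ip M (h s) (h t) = ip M (g s) (g t)"
    and z: "\<And>r. r < M \<Longrightarrow> (\<Sum>s\<in>S. d s * g s r) = 0"
    and r: "r < M"
  shows "(\<Sum>s\<in>S. d s * h s r) = 0"
proof -
  have "ip M (\<lambda>r. \<Sum>s\<in>S. d s * h s r) (\<lambda>r. \<Sum>s\<in>S. d s * h s r)
     = (\<Sum>s\<in>S. \<Sum>t\<in>S. cnj (d s) * d t * ip M (h s) (h t))"
    by (rule ip_expand[OF fin fin])
  also have "\<dots> = (\<Sum>s\<in>S. \<Sum>t\<in>S. cnj (d s) * d t * ip M (g s) (g t))"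
    using gram by (intro sum.cong refl) auto
  also have "\<dots> = ip M (\<lambda>r. \<Sum>s\<in>S. d s * g s r) (\<lambda>r. \<Sum>s\<in>S. d s * g s r)"
    by (rule ip_expand[OF fin fin, symmetric])
  also have "\<dots> = ip M (\<lambda>r. 0) (\<lambda>r. 0)" by (rule ip_cong) (use z in auto)
  also have "\<dots> = 0" unfolding ip_def by simp
  finally show ?thesis using ip_self_zero r by blast
qed

definition Km :: "nat \<Rightarrow> 'i set \<Rightarrow> ('i \<Rightarrow> nat \<Rightarrow> complex) \<Rightarrow> ('i \<Rightarrow> nat \<Rightarrow> complex) \<Rightarrow> complex mat" where
  "Km M S g h = mat M M (\<lambda>(r,i). \<Sum>s\<in>S. h s r * cnj (g s i))"

lemma Km_carrier: "Km M S g h \<in> carrier_mat M M"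
  unfolding Km_def by simp

lemma Km_mult:
  assumes "z \<in> carrier_vec M" "r < M"
  shows "(Km M S g h *\<^sub>v z) $ r = (\<Sum>s\<in>S. h s r * ip M (g s) (\<lambda>i. z $ i))"
proof -
  have "(Km M S g h *\<^sub>v z) $ r = (\<Sum>i<M. (\<Sum>s\<in>S. h s r * cnj (g s i)) * z $ i)"
    using assms unfolding Km_def by (simp add: scalar_prod_def atLeast0LessThan)
  also have "\<dots> = (\<Sum>i<M. \<Sum>s\<in>S. h s r * (cnj (g s i) * z $ i))"
    by (intro sum.cong refl) (simp add: sum_distrib_right mult.assoc)
  also have "\<dots> = (\<Sum>s\<in>S. \<Sum>i<M. h s r * (cnj (g s i) * z $ i))" by (rule sum.swap)
  also have "\<dots> = (\<Sum>s\<in>S. h s r * ip M (g s) (\<lambda>i. z $ i))"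
    unfolding ip_def by (simp add: sum_distrib_left)
  finally show ?thesis .
qed

lemma vec_nonzero:
  assumes "v \<in> carrier_vec M" "v \<noteq> 0\<^sub>v M"
  shows "\<exists>r<M. v $ r \<noteq> 0"
  using assms by (metis eq_vecI index_zero_vec(1,2) carrier_vecD)

lemma key:
  fixes g h :: "'i \<Rightarrow> nat \<Rightarrow> complex"
  assumes fin: "finite S" and M: "0 < M"
    and gram: "\<And>s t. s \<in> S \<Longrightarrow> t \<in> S \<Longrightarrow> ip M (h s) (h t) = ip M (g s) (g t)"
  shows "\<exists>f \<mu>. (\<exists>r<M. f r \<noteq> 0) \<and> cmod \<mu> = 1 \<and> (\<forall>s\<in>S. ip M (h s) f = \<mu> * ip M (g s) f)"
proof (cases "Determinant.det (Km M S g g) = 0")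
  case True
  then obtain v where v: "v \<in> carrier_vec M" "v \<noteq> 0\<^sub>v M" "Km M S g g *\<^sub>v v = 0\<^sub>v M"
    using det_0_iff_vec_prod_zero[OF Km_carrier] by blast
  define x where "x = (\<lambda>i. v $ i)"
  obtain r0 where r0: "r0 < M" "x r0 \<noteq> 0" using vec_nonzero[OF v(1,2)] unfolding x_def by blast
  have gx0: "(\<Sum>s\<in>S. g s r * ip M (g s) x) = 0" if "r < M" for r
  proof -
    have "(Km M S g g *\<^sub>v v) $ r = 0" using v(3) that by simp
    then show ?thesis using Km_mult[OF v(1) that, of S g g] unfolding x_def by simp
  qed
  have "ip M (\<lambda>r. \<Sum>s\<in>S. ip M (g s) x * g s r) x = ip M (\<lambda>r. 0) x"
    using gx0 by (intro ip_cong) (auto simp: mult.commute)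
  also have "\<dots> = 0" unfolding ip_def by simp
  finally have "(\<Sum>s\<in>S. cnj (ip M (g s) x) * ip M (g s) x) = 0"
    unfolding ip_expand_left[OF fin] .
  hence orth: "\<And>s. s \<in> S \<Longrightarrow> ip M (g s) x = 0" using sum_cnj_self_zero[OF fin, of "\<lambda>s. ip M (g s) x"] by blast
  have orth': "\<And>s. s \<in> S \<Longrightarrow> ip M x (g s) = 0" by (metis ip_cnj orth complex_cnj_zero)
  define C where "C = Km M S (\<lambda>s r. h s r - g s r) g"
  have Cc: "C \<in> carrier_mat M M" unfolding C_def by (rule Km_carrier)
  have "transpose_mat C *\<^sub>v vec M (\<lambda>i. cnj (x i)) = 0\<^sub>v M"
  proof (rule eq_vecI)
    fix r assume "r < dim_vec (0\<^sub>v M :: complex vec)"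
    hence r: "r < M" by simp
    have "(transpose_mat C *\<^sub>v vec M (\<lambda>i. cnj (x i))) $ r
        = (\<Sum>i<M. (\<Sum>s\<in>S. g s i * cnj (h s r - g s r)) * cnj (x i))"
      using r Cc unfolding C_def Km_def by (simp add: scalar_prod_def atLeast0LessThan)
    also have "\<dots> = (\<Sum>i<M. \<Sum>s\<in>S. (g s i * cnj (h s r - g s r)) * cnj (x i))"
      by (simp only: sum_distrib_right)
    also have "\<dots> = (\<Sum>i<M. \<Sum>s\<in>S. cnj (h s r - g s r) * (cnj (x i) * g s i))"
      by (intro sum.cong refl) (simp only: mult_ac)
    also have "\<dots> = (\<Sum>s\<in>S. \<Sum>i<M. cnj (h s r - g s r) * (cnj (x i) * g s i))"
      by (rule sum.swap)
    also have "\<dots> = (\<Sum>s\<in>S. cnj (h s r - g s r) * ip M x (g s))"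
      unfolding ip_def by (simp add: sum_distrib_left)
    also have "\<dots> = 0"
      using orth by (simp add: orth' del: ip_cnj)
    finally show "(transpose_mat C *\<^sub>v vec M (\<lambda>i. cnj (x i))) $ r = 0\<^sub>v M $ r"
      using r by simp
  qed (use Cc in auto)
  moreover have "vec M (\<lambda>i. cnj (x i)) \<noteq> 0\<^sub>v M"
  proof
    assume "vec M (\<lambda>i. cnj (x i)) = 0\<^sub>v M"
    hence "vec M (\<lambda>i. cnj (x i)) $ r0 = 0\<^sub>v M $ r0" by simp
    with r0 show False by simp
  qed
  moreover have "vec M (\<lambda>i. cnj (x i)) \<in> carrier_vec M" by simp
  moreover have "transpose_mat C \<in> carrier_mat M M" using Cc by simp
  ultimately have "Determinant.det (transpose_mat C) = 0"
    using det_0_iff_vec_prod_zero[of "transpose_mat C" M] by blast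
  hence "Determinant.det C = 0" using det_transpose[OF Cc] by simp
  then obtain w where w: "w \<in> carrier_vec M" "w \<noteq> 0\<^sub>v M" "C *\<^sub>v w = 0\<^sub>v M"
    using det_0_iff_vec_prod_zero[OF Cc] by blast
  define y where "y = (\<lambda>i. w $ i)"
  define d where "d s = ip M (h s) y - ip M (g s) y" for s
  have dg: "(\<Sum>s\<in>S. d s * g s r) = 0" if r: "r < M" for r
  proof -
    have "(C *\<^sub>v w) $ r = 0" using w(3) r by simp
    then have "(\<Sum>s\<in>S. g s r * ip M (\<lambda>i. h s i - g s i) y) = 0"
      using Km_mult[OF w(1) r, of S "\<lambda>s r. h s r - g s r" g] unfolding C_def y_def by simp
    then show ?thesis unfolding d_def ip_diff_left by (simp add: mult.commute)
  qed
  have dh: "(\<Sum>s\<in>S. d s * h s r) = 0" if r: "r < M" for r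
    using transfer_rel[OF fin gram dg r] by blast
  have "(\<Sum>s\<in>S. cnj (d s) * d s) = (\<Sum>s\<in>S. cnj (d s) * ip M (h s) y) - (\<Sum>s\<in>S. cnj (d s) * ip M (g s) y)"
    unfolding d_def[of _] by (simp add: sum_subtractf right_diff_distrib)
  also have "\<dots> = ip M (\<lambda>r. \<Sum>s\<in>S. d s * h s r) y - ip M (\<lambda>r. \<Sum>s\<in>S. d s * g s r) y"
    unfolding ip_expand_left[OF fin] by simp
  also have "\<dots> = ip M (\<lambda>r. 0) y - ip M (\<lambda>r. 0) y"
    using dh dg by (intro arg_cong2[where f="(-)"] ip_cong) auto
  also have "\<dots> = 0" by simp
  finally have d0: "\<And>s. s \<in> S \<Longrightarrow> d s = 0" using sum_cnj_self_zero[OF fin, of d] by blast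
  have "\<exists>r<M. y r \<noteq> 0" using vec_nonzero[OF w(1,2)] unfolding y_def by blast
  moreover have "\<forall>s\<in>S. ip M (h s) y = 1 * ip M (g s) y" using d0 unfolding d_def by simp
  ultimately show ?thesis by (intro exI[of _ y] exI[of _ 1]) auto
next
  case False
  have "Km M S g g \<in> Units (ring_mat TYPE(complex) M ())"
    by (rule det_non_zero_imp_unit[OF Km_carrier False])
  then obtain Gi where Gi: "Gi \<in> carrier_mat M M" "Km M S g g * Gi = 1\<^sub>m M"
    unfolding Units_def ring_mat_def by auto
  define coef where "coef x = (\<lambda>s. ip M (g s) (\<lambda>i. (Gi *\<^sub>v vec M x) $ i))" for x
  have repr: "x r = (\<Sum>s\<in>S. coef x s * g s r)" if r: "r < M" for x r
  proof -
    have "Km M S g g *\<^sub>v (Gi *\<^sub>v vec M x) = (Km M S g g * Gi) *\<^sub>v vec M x"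
      using Gi(1) by (simp add: assoc_mult_mat_vec[OF Km_carrier Gi(1)])
    also have "\<dots> = vec M x" using Gi(2) by simp
    finally have "(Km M S g g *\<^sub>v (Gi *\<^sub>v vec M x)) $ r = x r" using r by simp
    moreover have "Gi *\<^sub>v vec M x \<in> carrier_vec M" using Gi(1) by simp
    ultimately show ?thesis using Km_mult[OF _ r, of "Gi *\<^sub>v vec M x" S g g] unfolding coef_def by (simp add: mult.commute)
  qed
  define Um where "Um = Km M S g h * Gi"
  have Umc: "Um \<in> carrier_mat M M" unfolding Um_def using mult_carrier_mat[OF Km_carrier Gi(1)] .
  define U where "U x = (\<lambda>r. (Um *\<^sub>v vec M x) $ r)" for x
  have Uexp: "U x r = (\<Sum>s\<in>S. coef x s * h s r)" if r: "r < M" for x r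
  proof -
    have "Um *\<^sub>v vec M x = Km M S g h *\<^sub>v (Gi *\<^sub>v vec M x)"
      unfolding Um_def by (rule assoc_mult_mat_vec[OF Km_carrier Gi(1)], simp)
    moreover have "Gi *\<^sub>v vec M x \<in> carrier_vec M" using Gi(1) by simp
    ultimately show ?thesis using Km_mult[OF _ r, of "Gi *\<^sub>v vec M x" S g h] unfolding U_def coef_def by (simp add: mult.commute)
  qed
  have iso: "ip M (U x) (U y) = ip M x y" for x y
  proof -
    have "ip M (U x) (U y) = ip M (\<lambda>r. \<Sum>s\<in>S. coef x s * h s r) (\<lambda>r. \<Sum>s\<in>S. coef y s * h s r)"
      by (rule ip_cong) (auto simp: Uexp)
    also have "\<dots> = (\<Sum>s\<in>S. \<Sum>t\<in>S. cnj (coef x s) * coef y t * ip M (h s) (h t))"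
      by (rule ip_expand[OF fin fin])
    also have "\<dots> = (\<Sum>s\<in>S. \<Sum>t\<in>S. cnj (coef x s) * coef y t * ip M (g s) (g t))"
      using gram by (intro sum.cong refl) auto
    also have "\<dots> = ip M (\<lambda>r. \<Sum>s\<in>S. coef x s * g s r) (\<lambda>r. \<Sum>s\<in>S. coef y s * g s r)"
      by (rule ip_expand[OF fin fin, symmetric])
    also have "\<dots> = ip M x y"
      by (rule ip_cong) (auto simp: repr[symmetric])
    finally show ?thesis .
  qed
  have Ug: "U (g t) r = h t r" if t: "t \<in> S" and r: "r < M" for t r
  proof -
    define d where "d s = coef (g t) s - (if s = t then 1 else 0)" for s
    have dsum: "(\<Sum>s\<in>S. d s * k s q) = (\<Sum>s\<in>S. coef (g t) s * k s q) - k t q" for k :: "'i \<Rightarrow> nat \<Rightarrow> complex" and q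
    proof -
      have "(\<Sum>s\<in>S. d s * k s q) = (\<Sum>s\<in>S. coef (g t) s * k s q - (if s = t then k t q else 0))"
        unfolding d_def by (intro sum.cong refl) (auto simp: algebra_simps)
      also have "\<dots> = (\<Sum>s\<in>S. coef (g t) s * k s q) - k t q"
        using fin t by (simp add: sum_subtractf)
      finally show ?thesis .
    qed
    have "(\<Sum>s\<in>S. d s * g s r) = 0" if "r < M" for r
      using repr[OF that, of "g t"] dsum[of g] by simp
    hence "(\<Sum>s\<in>S. d s * h s r) = 0" using transfer_rel[of S M h g d r] fin gram r by blast
    then show ?thesis using dsum[of h] Uexp[OF r] by simp
  qed
  obtain lam where "lam \<in> spectrum Um" using spectrum_non_empty[OF Umc M] by blast
  then obtain e where e: "e \<in> carrier_vec M" "e \<noteq> 0\<^sub>v M" "Um *\<^sub>v e = lam \<cdot>\<^sub>v e"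
    unfolding spectrum_def eigenvalue_def eigenvector_def using Umc by auto
  define ef where "ef = (\<lambda>i. e $ i)"
  have vef: "vec M ef = e" unfolding ef_def using e(1) by (intro eq_vecI) auto
  have Uef: "U ef r = lam * ef r" if "r < M" for r
  proof -
    have "U ef r = (Um *\<^sub>v e) $ r" unfolding U_def vef ..
    then show ?thesis unfolding e(3) ef_def using e(1) that by simp
  qed
  have nz: "ip M ef ef \<noteq> 0"
    using vec_nonzero[OF e(1,2)] ip_self_zero unfolding ef_def by blast
  have "ip M ef ef = ip M (U ef) (U ef)" by (rule iso[symmetric])
  also have "\<dots> = ip M (\<lambda>r. lam * ef r) (\<lambda>r. lam * ef r)" by (rule ip_cong) (auto simp: Uef)
  also have "\<dots> = cnj lam * lam * ip M ef ef" by (simp add: ip_scale_left ip_scale_right)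
  finally have ll: "cnj lam * lam = 1" using nz by (metis mult_cancel_right2)
  have rel: "ip M (h t) ef = cnj lam * ip M (g t) ef" if t: "t \<in> S" for t
  proof -
    have "ip M (h t) ef = ip M (U (g t)) ef" by (rule ip_cong) (auto simp: Ug[OF t])
    moreover have "lam * ip M (U (g t)) ef = ip M (g t) ef"
    proof -
      have "lam * ip M (U (g t)) ef = ip M (U (g t)) (\<lambda>r. lam * ef r)" by (simp add: ip_scale_right)
      also have "\<dots> = ip M (U (g t)) (U ef)" by (rule ip_cong) (auto simp: Uef)
      also have "\<dots> = ip M (g t) ef" by (rule iso)
      finally show ?thesis .
    qed
    ultimately show ?thesis using ll by (metis mult.assoc mult_1)
  qed
  have "cmod (cnj lam) = 1"
  proof -
    have "of_real ((cmod lam)\<^sup>2) = (1::complex)" using ll cnj_self by metis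
    hence "(cmod lam)\<^sup>2 = 1" by (metis of_real_eq_1_iff)
    thus ?thesis using norm_ge_zero[of lam] by (auto simp: power2_eq_1_iff)
  qed
  moreover have "\<exists>r<M. ef r \<noteq> 0" using vec_nonzero[OF e(1,2)] unfolding ef_def by blast
  ultimately show ?thesis using rel by blast
qed



definition qf :: "nat \<Rightarrow> (nat \<Rightarrow> nat \<Rightarrow> complex) \<Rightarrow> (nat \<Rightarrow> complex) \<Rightarrow> complex" where
  "qf N A v = (\<Sum>k<N. \<Sum>l<N. cnj (v k) * A k l * v l)"

definition psdf :: "nat \<Rightarrow> (nat \<Rightarrow> nat \<Rightarrow> complex) \<Rightarrow> bool" where
  "psdf N A \<longleftrightarrow> (\<forall>k<N. \<forall>l<N. A l k = cnj (A k l)) \<and> (\<forall>v. 0 \<le> Re (qf N A v))"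

lemma qf_Suc: "qf (Suc N) A v = qf N A v + (\<Sum>k<N. cnj (v k) * A k N) * v N
   + cnj (v N) * (\<Sum>l<N. A N l * v l) + cnj (v N) * A N N * v N"
  unfolding qf_def by (simp add: sum.distrib sum_distrib_right sum_distrib_left mult.assoc)

lemma qf_cong: "(\<And>k. k < N \<Longrightarrow> v k = w k) \<Longrightarrow> qf N A v = qf N A w"
  unfolding qf_def by (intro sum.cong refl) auto


lemma psdf_Suc_restrict: assumes "psdf (Suc N) A" shows "psdf N A"
  unfolding psdf_def
proof (intro conjI allI impI)
  fix k l assume "k < N" "l < N" then show "A l k = cnj (A k l)" using assms unfolding psdf_def by (meson less_SucI)
next
  fix v
  define w where "w j = (if j < N then v j else (0::complex))" for j
  have "qf (Suc N) A w = qf N A w" using qf_Suc[of N A w] by (simp add: w_def)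
  also have "\<dots> = qf N A v" by (rule qf_cong) (simp add: w_def)
  moreover have "0 \<le> Re (qf (Suc N) A w)" using assms unfolding psdf_def by blast
  ultimately show "0 \<le> Re (qf N A v)" by simp
qed

lemma psdf_zero_pivot:
  assumes A: "psdf (Suc N) A" and d: "A N N = 0" and k: "k < N"
  shows "A k N = 0"
proof -
  define c where "c = A k N"
  define a where "a = Re (A k k)"
  have a0: "0 \<le> a"
  proof -
    define v where "v j = (if j = k then 1 else 0 :: complex)" for j
    have "qf (Suc N) A v = (\<Sum>j<Suc N. \<Sum>l<Suc N. (if l = k then (if j = k then A k k else 0) else 0))"
      unfolding qf_def v_def by (intro sum.cong refl) auto
    also have "\<dots> = A k k" using k by (simp add: sum.delta)
    finally have "qf (Suc N) A v = A k k" .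
    moreover have "0 \<le> Re (qf (Suc N) A v)" using A unfolding psdf_def by blast
    ultimately show ?thesis unfolding a_def by simp
  qed
  define t where "t = 1 / (a + 1)"
  have t0: "0 < t" using a0 unfolding t_def by simp
  have ta: "t * a < 1" using a0 unfolding t_def by (simp add: field_simps)
  define x where "x = - of_real t * c"
  define v where "v j = (if j = k then x else if j = N then 1 else 0)" for j
  have Nk: "A N k = cnj c" using A k unfolding psdf_def c_def by (meson less_SucI lessI)
  have q1: "qf N A v = cnj x * A k k * x"
  proof -
    have "qf N A v = (\<Sum>j<N. \<Sum>l<N. (if l = k then (if j = k then cnj x * A k k * x else 0) else 0))"
      unfolding qf_def v_def using k by (intro sum.cong refl) auto
    then show ?thesis using k by (simp add: sum.delta)
  qed
  have q2: "(\<Sum>j<N. cnj (v j) * A j N) = cnj x * c"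
  proof -
    have "(\<Sum>j<N. cnj (v j) * A j N) = (\<Sum>j<N. (if j = k then cnj x * c else 0))"
      unfolding v_def c_def using k by (intro sum.cong refl) auto
    then show ?thesis using k by (simp add: sum.delta)
  qed
  have q3: "(\<Sum>l<N. A N l * v l) = cnj c * x"
  proof -
    have "(\<Sum>l<N. A N l * v l) = (\<Sum>l<N. (if l = k then cnj c * x else 0))"
      unfolding v_def using k Nk by (intro sum.cong refl) auto
    then show ?thesis using k by (simp add: sum.delta)
  qed
  have vN: "v N = 1" using k unfolding v_def by simp
  have "qf (Suc N) A v = cnj x * A k k * x + cnj x * c + cnj c * x"
    unfolding qf_Suc q1 q2 q3 vN d by simp
  also have "\<dots> = of_real t ^ 2 * (cnj c * c) * A k k - 2 * of_real t * (cnj c * c)"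
    unfolding x_def by (simp add: algebra_simps power2_eq_square)
  also have "\<dots> = of_real (t^2 * (cmod c)\<^sup>2) * A k k - of_real (2 * t * (cmod c)\<^sup>2)"
    unfolding cnj_self by simp
  finally have "Re (qf (Suc N) A v) = t^2 * (cmod c)\<^sup>2 * a - 2 * t * (cmod c)\<^sup>2"
    unfolding a_def by simp
  moreover have "0 \<le> Re (qf (Suc N) A v)" using A unfolding psdf_def by blast
  ultimately have "0 \<le> t * (cmod c)\<^sup>2 * (t * a - 2)" by (simp add: algebra_simps power2_eq_square)
  moreover have "t * a - 2 < 0" using ta by simp
  ultimately have "t * (cmod c)\<^sup>2 \<le> 0" by (simp add: mult_le_0_iff zero_le_mult_iff)
  hence "(cmod c)\<^sup>2 \<le> 0" using t0 by (simp add: mult_le_0_iff)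
  hence "cmod c = 0" by simp
  then show ?thesis unfolding c_def by simp
qed

lemma psdf_herm: "psdf N A \<Longrightarrow> k < N \<Longrightarrow> l < N \<Longrightarrow> A l k = cnj (A k l)"
  unfolding psdf_def by blast

lemma psdf_diag:
  assumes A: "psdf N A" and k: "k < N"
  shows "0 \<le> Re (A k k)" "A k k = of_real (Re (A k k))"
proof -
  define v where "v j = (if j = k then 1 else 0 :: complex)" for j
  have "qf N A v = (\<Sum>j<N. \<Sum>l<N. (if l = k then (if j = k then A k k else 0) else 0))"
    unfolding qf_def v_def by (intro sum.cong refl) auto
  also have "\<dots> = A k k" using k by (simp add: sum.delta)
  finally have "qf N A v = A k k" .
  moreover have "0 \<le> Re (qf N A v)" using A unfolding psdf_def by blast
  ultimately show "0 \<le> Re (A k k)" by simp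
  have "A k k = cnj (A k k)" using psdf_herm[OF A k k] .
  then have "Im (A k k) = 0" by (metis Reals_cnj_iff complex_is_Real_iff)
  then show "A k k = of_real (Re (A k k))" by (simp add: complex_eq_iff)
qed

lemma psdf_schur:
  assumes A: "psdf (Suc N) A" and d: "0 < Re (A N N)"
  shows "psdf N (\<lambda>a b. A a b - A a N * A N b / A N N)"
proof -
  define d where "d = A N N"
  have dd: "cnj d = d" using psdf_herm[OF A, of N N] unfolding d_def by simp
  have d0: "d \<noteq> 0" using d unfolding d_def by auto
  have herm: "A l k = cnj (A k l)" if "k < Suc N" "l < Suc N" for k l using psdf_herm[OF A that] .
  show ?thesis unfolding psdf_def
  proof (intro conjI allI impI)
    fix k l assume kl: "k < N" "l < N"
    show "A l k - A l N * A N k / A N N = cnj (A k l - A k N * A N l / A N N)"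
      using herm[of k l] herm[of k N] herm[of N l] kl dd unfolding d_def[symmetric] by simp
  next
    fix v
    define s where "s = (\<Sum>l<N. A N l * v l)"
    define c where "c = - s / d"
    define w where "w j = (if j < N then v j else c)" for j
    have cs: "(\<Sum>k<N. cnj (v k) * A k N) = cnj s"
    proof -
      have "(\<Sum>k<N. cnj (v k) * A k N) = (\<Sum>k<N. cnj (A N k * v k))"
      proof (intro sum.cong refl)
        fix k assume "k \<in> {..<N}"
        then have "A k N = cnj (A N k)" using herm[of N k] by simp
        then show "cnj (v k) * A k N = cnj (A N k * v k)" by (simp add: mult.commute)
      qed
      then show ?thesis unfolding s_def cnj_sum by simp
    qed
    have "qf (Suc N) A w = qf N A v + cnj s * c + cnj c * s + cnj c * d * c"
    proof -
      have "qf N A w = qf N A v" by (rule qf_cong) (simp add: w_def)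
      moreover have "(\<Sum>k<N. cnj (w k) * A k N) = cnj s" using cs by (simp add: w_def)
      moreover have "(\<Sum>l<N. A N l * w l) = s" by (simp add: w_def s_def)
      ultimately show ?thesis unfolding qf_Suc d_def by (simp add: w_def)
    qed
    also have "\<dots> = qf N A v - cnj s * s / d"
      unfolding c_def using d0 dd by (simp add: field_simps)
    also have "\<dots> = qf N (\<lambda>a b. A a b - A a N * A N b / A N N) v"
    proof -
      have "qf N (\<lambda>a b. A a b - A a N * A N b / A N N) v
          = qf N A v - (\<Sum>k<N. \<Sum>l<N. (cnj (v k) * A k N) * (A N l * v l)) / d"
        unfolding qf_def d_def by (simp add: sum_subtractf sum_divide_distrib algebra_simps)
      also have "\<dots> = qf N A v - cnj s * s / d"
        unfolding sum_product[symmetric] cs s_def ..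
      finally show ?thesis by simp
    qed
    finally have "qf N (\<lambda>a b. A a b - A a N * A N b / A N N) v = qf (Suc N) A w" by simp
    moreover have "0 \<le> Re (qf (Suc N) A w)" using A unfolding psdf_def by blast
    ultimately show "0 \<le> Re (qf N (\<lambda>a b. A a b - A a N * A N b / A N N) v)" by simp
  qed
qed

lemma gram_exists: "psdf N A \<Longrightarrow> \<exists>M g. \<forall>a<N. \<forall>b<N. A a b = ip M (g a) (g b)"
proof (induction N arbitrary: A)
  case 0
  then show ?case by auto
next
  case (Suc N)
  note A = Suc.prems
  have herm: "A l k = cnj (A k l)" if "k < Suc N" "l < Suc N" for k l using psdf_herm[OF A that] .
  have dge: "0 \<le> Re (A N N)" and dre: "A N N = of_real (Re (A N N))" using psdf_diag[OF A, of N] by auto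
  show ?case
  proof (cases "Re (A N N) = 0")
    case True
    then have d0: "A N N = 0" using dre by simp
    have c0: "A k N = 0" if "k < N" for k using psdf_zero_pivot[OF A d0 that] .
    have c0': "A N k = 0" if "k < N" for k using herm[of N k] c0[OF that] that by simp
    obtain M g where g: "\<forall>a<N. \<forall>b<N. A a b = ip M (g a) (g b)"
      using Suc.IH[OF psdf_Suc_restrict[OF A]] by blast
    define g' where "g' a = (if a < N then g a else (\<lambda>_. 0))" for a
    have "A a b = ip M (g' a) (g' b)" if "a < Suc N" "b < Suc N" for a b
    proof (cases "a < N")
      case True
      then show ?thesis
        by (cases "b < N") (use g that c0 in \<open>auto simp: g'_def ip_def less_Suc_eq\<close>)
    next
      case False
      then have "a = N" using that by simp
      then show ?thesis
        by (cases "b < N") (use that c0' d0 in \<open>auto simp: g'_def ip_def less_Suc_eq\<close>)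
    qed
    then show ?thesis by blast
  next
    case False
    with dge have dpos: "0 < Re (A N N)" by simp
    define B where "B = (\<lambda>a b. A a b - A a N * A N b / A N N)"
    obtain M g where g: "\<forall>a<N. \<forall>b<N. B a b = ip M (g a) (g b)"
      using Suc.IH[OF psdf_schur[OF A dpos]] unfolding B_def by blast
    define sd where "sd = sqrt (Re (A N N))"
    have sd0: "0 < sd" using dpos unfolding sd_def by simp
    have sdsq: "of_real sd * of_real sd = A N N"
    proof -
      have "sd * sd = Re (A N N)" using dpos unfolding sd_def by simp
      then have "of_real sd * of_real sd = (of_real (Re (A N N)) :: complex)"
        by (metis of_real_mult)
      then show ?thesis using dre by simp
    qed
    define G where "G a = (\<lambda>r. if r < M then (if a < N then g a r else 0)
                                 else (if a < N then A N a / of_real sd else of_real sd))" for a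
    have ipG: "ip (Suc M) (G a) (G b) = (if a < N \<and> b < N then ip M (g a) (g b) else 0) + cnj (G a M) * G b M" for a b
    proof -
      have "ip M (G a) (G b) = (if a < N \<and> b < N then ip M (g a) (g b) else 0)"
        by (auto simp: G_def ip_def)
      then show ?thesis unfolding ip_Suc by simp
    qed
    have "A a b = ip (Suc M) (G a) (G b)" if ab: "a < Suc N" "b < Suc N" for a b
    proof -
      consider "a < N" "b < N" | "a < N" "b = N" | "a = N" "b < N" | "a = N" "b = N"
        using ab by linarith
      then show ?thesis
      proof cases
        case 1
        have "ip (Suc M) (G a) (G b) = B a b + cnj (A N a) * A N b / (of_real sd * of_real sd)"
          using 1 g unfolding ipG by (simp add: G_def)
        also have "\<dots> = A a b"
          unfolding sdsq B_def using herm[of a N] 1 by simp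
        finally show ?thesis ..
      next
        case 2
        have "ip (Suc M) (G a) (G b) = cnj (A N a) / of_real sd * of_real sd"
          using 2 unfolding ipG by (simp add: G_def)
        also have "\<dots> = A a b" using 2 sd0 herm[of a N] by simp
        finally show ?thesis ..
      next
        case 3
        have "ip (Suc M) (G a) (G b) = of_real sd * (A N b / of_real sd)"
          using 3 unfolding ipG by (simp add: G_def)
        also have "\<dots> = A a b" using 3 sd0 by simp
        finally show ?thesis ..
      next
        case 4
        have "ip (Suc M) (G a) (G b) = of_real sd * of_real sd"
          using 4 unfolding ipG by (simp add: G_def)
        also have "\<dots> = A a b" using 4 sdsq by simp
        finally show ?thesis ..
      qed
    qed
    then show ?thesis by blast
  qed
qed



lemma scaleC_zero_left [simp]: "(0::complex) *\<^sub>C (x::'a::chilbert) = 0"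
proof -
  have "(0::complex) *\<^sub>C x = (0 + 0) *\<^sub>C x" by simp
  also have "\<dots> = 0 *\<^sub>C x + 0 *\<^sub>C x" by (rule scaleC_add_left)
  finally show ?thesis by simp
qed

lemma cinner_zero_right [simp]: "cinner (x::'a::chilbert) 0 = 0"
proof -
  have "cinner x 0 = cinner x ((0::complex) *\<^sub>C 0)" by simp
  also have "\<dots> = 0" by (simp only: cinner_scaleC_right) simp
  finally show ?thesis .
qed

lemma cinner_sum_right: "cinner (x::'a::chilbert) (\<Sum>i\<in>I. f i) = (\<Sum>i\<in>I. cinner x (f i))"
  by (induction I rule: infinite_finite_induct) (simp_all add: cinner_add_right)

lemma cinner_scaleC_left: "cinner (a *\<^sub>C (x::'a::chilbert)) y = cnj a * cinner x y"
  by (metis cinner_cnj cinner_scaleC_right complex_cnj_cnj complex_cnj_mult)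

lemma cinner_add_left: "cinner ((x::'a::chilbert) + y) z = cinner x z + cinner y z"
  by (metis cinner_cnj cinner_add_right complex_cnj_add)

lemma cinner_zero_left [simp]: "cinner 0 (y::'a::chilbert) = 0"
  by (metis cinner_cnj cinner_zero_right complex_cnj_zero)

lemma cinner_sum_left: "cinner (\<Sum>i\<in>I. (f i::'a::chilbert)) y = (\<Sum>i\<in>I. cinner (f i) y)"
  by (induction I rule: infinite_finite_induct) (simp_all add: cinner_add_left)

lemma bounded_op_zero: "bounded_op T \<Longrightarrow> T 0 = 0"
  unfolding bounded_op_def by (metis add_cancel_right_right add_0)

lemma bounded_op_sum: "bounded_op T \<Longrightarrow> T (\<Sum>i\<in>I. f i) = (\<Sum>i\<in>I. T (f i))"
  by (induction I rule: infinite_finite_induct) (auto simp: bounded_op_zero, simp add: bounded_op_def)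

lemma bounded_op_scale: "bounded_op T \<Longrightarrow> T (a *\<^sub>C x) = a *\<^sub>C T x"
  unfolding bounded_op_def by blast

lemma ip_lin2: "ip M (\<lambda>r. x r - c * u r) (\<lambda>r. y r - d * u r)
   = ip M x y - d * ip M x u - cnj c * ip M u y + cnj c * d * ip M u u"
proof -
  have "ip M (\<lambda>r. x r - c * u r) (\<lambda>r. y r - d * u r)
     = (\<Sum>r<M. cnj (x r) * y r - d * (cnj (x r) * u r) - cnj c * (cnj (u r) * y r) + cnj c * d * (cnj (u r) * u r))"
    unfolding ip_def by (intro sum.cong refl) (simp add: algebra_simps)
  also have "\<dots> = ip M x y - d * ip M x u - cnj c * ip M u y + cnj c * d * ip M u u"
    unfolding ip_def by (simp add: sum.distrib sum_subtractf sum_distrib_left)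
  finally show ?thesis .
qed

lemma ip_delta_left: "r0 < M \<Longrightarrow> ip M (\<lambda>r. if r = r0 then 1 else 0) y = y r0"
proof -
  assume r0: "r0 < M"
  have "ip M (\<lambda>r. if r = r0 then 1 else 0) y = (\<Sum>r<M. if r = r0 then y r else 0)"
    unfolding ip_def by (intro sum.cong refl) auto
  also have "\<dots> = y r0" using r0 by (simp add: sum.delta)
  finally show ?thesis .
qed

lemma householder:
  fixes fh :: "nat \<Rightarrow> complex"
  assumes norm1: "ip (Suc M') fh fh = 1" and real: "fh M' = of_real tt"
  defines "u \<equiv> \<lambda>r. (if r = M' then 1 else 0) - fh r"
  defines "\<alpha> \<equiv> 2 / ip (Suc M') u u"
  shows "ip (Suc M') (\<lambda>r. x r - \<alpha> * u r * ip (Suc M') u x) (\<lambda>r. y r - \<alpha> * u r * ip (Suc M') u y)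
           = ip (Suc M') x y"
    and "x M' - \<alpha> * u M' * ip (Suc M') u x = ip (Suc M') fh x"
proof -
  let ?e = "\<lambda>r. if r = M' then 1 else (0::complex)"
  let ?ip = "ip (Suc M')"
  have eL: "?ip ?e y = y M'" for y by (rule ip_delta_left) simp
  have eR: "?ip y ?e = cnj (y M')" for y using eL[of y] ip_cnj by metis
  have "?ip u u = ?ip (\<lambda>r. ?e r - 1 * fh r) (\<lambda>r. ?e r - 1 * fh r)" unfolding u_def by simp
  also have "\<dots> = 2 - 2 * of_real tt"
    unfolding ip_lin2 eL eR norm1 real by simp
  finally have nu: "?ip u u = of_real (2 - 2 * tt)" by simp
  have ca: "cnj \<alpha> = \<alpha>" unfolding \<alpha>_def nu by simp
  have aa: "\<alpha> * \<alpha> * ?ip u u = 2 * \<alpha>"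
    unfolding \<alpha>_def by (cases "?ip u u = 0") (simp_all add: field_simps)
  show "?ip (\<lambda>r. x r - \<alpha> * u r * ?ip u x) (\<lambda>r. y r - \<alpha> * u r * ?ip u y) = ?ip x y"
  proof -
    have "?ip (\<lambda>r. x r - \<alpha> * u r * ?ip u x) (\<lambda>r. y r - \<alpha> * u r * ?ip u y)
        = ?ip (\<lambda>r. x r - (\<alpha> * ?ip u x) * u r) (\<lambda>r. y r - (\<alpha> * ?ip u y) * u r)"
      by (simp add: mult_ac)
    also have "\<dots> = ?ip x y - \<alpha> * ?ip u y * ?ip x u - \<alpha> * ?ip x u * ?ip u y
        + (\<alpha> * \<alpha> * ?ip u u) * ?ip x u * ?ip u y"
      unfolding ip_lin2 by (simp add: ca ip_cnj mult_ac)
    also have "\<dots> = ?ip x y" unfolding aa by (simp add: algebra_simps)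
    finally show ?thesis .
  qed
  have fhx: "?ip fh x = x M' - ?ip u x"
  proof -
    have "?ip fh x = ?ip (\<lambda>r. ?e r - u r) x" by (rule ip_cong) (simp_all add: u_def)
    also have "\<dots> = x M' - ?ip u x" unfolding ip_diff_left eL ..
    finally show ?thesis .
  qed
  have "\<alpha> * u M' * ?ip u x = ?ip u x"
  proof (cases "?ip u u = 0")
    case True
    then have "u r = 0" if "r < Suc M'" for r using ip_self_zero that by blast
    then have "?ip u x = 0" unfolding ip_def by simp
    then show ?thesis by simp
  next
    case False
    then have "tt \<noteq> 1" using nu by auto
    have uM: "u M' = of_real (1 - tt)" unfolding u_def real by simp
    have nu2: "?ip u u = 2 * u M'" unfolding nu uM by (simp add: algebra_simps)
    have "u M' \<noteq> 0" using False nu2 by auto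
    then have "\<alpha> * u M' = 1" unfolding \<alpha>_def nu2 by simp
    then show ?thesis by simp
  qed
  then show "x M' - \<alpha> * u M' * ?ip u x = ?ip fh x" using fhx by simp
qed

definition gm :: "nat \<Rightarrow> nat \<Rightarrow> (nat \<Rightarrow> nat \<Rightarrow> complex) \<Rightarrow> (nat \<Rightarrow> nat \<Rightarrow> complex) \<Rightarrow> complex mat" where
  "gm M n u v = mat n n (\<lambda>(k,l). ip M (u k) (v l))"

lemma gm_carrier: "gm M n u v \<in> carrier_mat n n" unfolding gm_def by simp

lemma lin_add: "linear_map_to_BH n \<phi> \<Longrightarrow> X \<in> carrier_mat n n \<Longrightarrow> Y \<in> carrier_mat n n \<Longrightarrow> \<phi> (X + Y) x = \<phi> X x + \<phi> Y x"
  unfolding linear_map_to_BH_def by metis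

lemma lin_smult: "linear_map_to_BH n \<phi> \<Longrightarrow> X \<in> carrier_mat n n \<Longrightarrow> \<phi> (a \<cdot>\<^sub>m X) x = a *\<^sub>C \<phi> X x"
  unfolding linear_map_to_BH_def by metis

lemma lin_bounded: "linear_map_to_BH n \<phi> \<Longrightarrow> X \<in> carrier_mat n n \<Longrightarrow> bounded_op (\<phi> X)"
  unfolding linear_map_to_BH_def by blast

lemma lin_zero:
  fixes \<phi> :: "complex mat \<Rightarrow> 'a::chilbert \<Rightarrow> 'a"
  assumes "linear_map_to_BH n \<phi>" shows "\<phi> (0\<^sub>m n n) x = 0"
proof -
  have "(0::complex) \<cdot>\<^sub>m 0\<^sub>m n n = 0\<^sub>m n n" by (rule eq_matI) auto
  then have "\<phi> (0\<^sub>m n n) x = \<phi> ((0::complex) \<cdot>\<^sub>m 0\<^sub>m n n) x" by simp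
  also have "\<dots> = (0::complex) *\<^sub>C \<phi> (0\<^sub>m n n) x" by (rule lin_smult[OF assms zero_carrier_mat])
  finally show ?thesis by simp
qed

lemma rank1_psd: "psd_mat n (mat n n (\<lambda>(k,l). \<mu> ^ k * cnj \<mu> ^ l))"
  unfolding psd_mat_def
proof (intro conjI allI impI)
  show "mat n n (\<lambda>(k,l). \<mu> ^ k * cnj \<mu> ^ l) \<in> carrier_mat n n" by simp
next
  fix k l assume "k < n" "l < n"
  then show "mat n n (\<lambda>(k,l). \<mu> ^ k * cnj \<mu> ^ l) $$ (l, k) = cnj (mat n n (\<lambda>(k,l). \<mu> ^ k * cnj \<mu> ^ l) $$ (k, l))"
    by (simp add: mult.commute)
next
  fix v :: "nat \<Rightarrow> complex"
  define w where "w = (\<Sum>l<n. cnj \<mu> ^ l * v l)"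
  have "(\<Sum>k<n. \<Sum>l<n. cnj (v k) * mat n n (\<lambda>(k,l). \<mu> ^ k * cnj \<mu> ^ l) $$ (k, l) * v l)
      = (\<Sum>k<n. \<Sum>l<n. (cnj (v k) * \<mu> ^ k) * (cnj \<mu> ^ l * v l))"
    by (intro sum.cong refl) (simp add: mult_ac)
  also have "\<dots> = (\<Sum>k<n. cnj (v k) * \<mu> ^ k) * w"
    unfolding w_def sum_product ..
  also have "(\<Sum>k<n. cnj (v k) * \<mu> ^ k) = cnj w"
    unfolding w_def cnj_sum by (simp add: mult.commute)
  finally have eq: "(\<Sum>k<n. \<Sum>l<n. cnj (v k) * mat n n (\<lambda>(k,l). \<mu> ^ k * cnj \<mu> ^ l) $$ (k, l) * v l)
      = of_real ((cmod w)\<^sup>2)" unfolding cnj_self .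
  show "Im (\<Sum>k<n. \<Sum>l<n. cnj (v k) * mat n n (\<lambda>(k,l). \<mu> ^ k * cnj \<mu> ^ l) $$ (k, l) * v l) = 0"
    unfolding eq by simp
  show "0 \<le> Re (\<Sum>k<n. \<Sum>l<n. cnj (v k) * mat n n (\<lambda>(k,l). \<mu> ^ k * cnj \<mu> ^ l) $$ (k, l) * v l)"
    unfolding eq by simp
qed

lemma rank1_pos:
  fixes \<phi> :: "complex mat \<Rightarrow> 'a::chilbert \<Rightarrow> 'a" and \<mu> :: complex
  assumes lin: "linear_map_to_BH n \<phi>" and pos: "positive_map n \<phi>"
  defines "Bm \<equiv> mat n n (\<lambda>(k,l). \<mu> ^ k * cnj \<mu> ^ l)"
  shows "Im (\<Sum>i<p. \<Sum>j<p. (\<beta> i * cnj (\<beta> j)) * cinner (h i) (\<phi> Bm (h j))) = 0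
       \<and> 0 \<le> Re (\<Sum>i<p. \<Sum>j<p. (\<beta> i * cnj (\<beta> j)) * cinner (h i) (\<phi> Bm (h j)))"
proof -
  have bo: "bounded_op (\<phi> Bm)" using lin_bounded[OF lin] unfolding Bm_def by simp
  have po: "positive_op (\<phi> Bm)" using pos rank1_psd unfolding positive_map_def Bm_def by blast
  define y where "y = (\<Sum>j<p. cnj (\<beta> j) *\<^sub>C h j)"
  have "cinner y (\<phi> Bm y) = cinner y (\<Sum>j<p. cnj (\<beta> j) *\<^sub>C \<phi> Bm (h j))"
    unfolding y_def bounded_op_sum[OF bo] bounded_op_scale[OF bo] ..
  also have "\<dots> = (\<Sum>j<p. cnj (\<beta> j) * (\<Sum>i<p. \<beta> i * cinner (h i) (\<phi> Bm (h j))))"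
    unfolding cinner_sum_right cinner_scaleC_right y_def cinner_sum_left cinner_scaleC_left by simp
  also have "\<dots> = (\<Sum>j<p. \<Sum>i<p. (\<beta> i * cnj (\<beta> j)) * cinner (h i) (\<phi> Bm (h j)))"
    by (simp add: sum_distrib_left mult_ac)
  also have "\<dots> = (\<Sum>i<p. \<Sum>j<p. (\<beta> i * cnj (\<beta> j)) * cinner (h i) (\<phi> Bm (h j)))"
    by (rule sum.swap)
  finally show ?thesis using po unfolding positive_op_def by metis
qed

lemma main_ind:
  fixes \<phi> :: "complex mat \<Rightarrow> 'a::chilbert \<Rightarrow> 'a" and h :: "nat \<Rightarrow> 'a"
  assumes lin: "linear_map_to_BH n \<phi>" and pos: "positive_map n \<phi>"
  shows "(\<forall>i<p. \<forall>j<p. \<forall>k l. Suc k < n \<longrightarrow> Suc l < n \<longrightarrow>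
            ip M (G i (Suc k)) (G j (Suc l)) = ip M (G i k) (G j l)) \<Longrightarrow>
     Im (\<Sum>i<p. \<Sum>j<p. cinner (h i) (\<phi> (gm M n (G i) (G j)) (h j))) = 0
   \<and> 0 \<le> Re (\<Sum>i<p. \<Sum>j<p. cinner (h i) (\<phi> (gm M n (G i) (G j)) (h j)))"
proof (induction M arbitrary: G)
  case 0
  have "gm 0 n (G i) (G j) = 0\<^sub>m n n" for i j by (rule eq_matI) (auto simp: gm_def ip_def)
  then show ?case using lin_zero[OF lin] by simp
next
  case (Suc M')
  note T = Suc.prems
  define S where "S = {..<p} \<times> {k. Suc k < n}"
  have finS: "finite S" unfolding S_def
    by (rule finite_cartesian_product) (auto intro: finite_subset[of _ "{..<n}"])
  have gram: "ip (Suc M') ((\<lambda>(i,k). G i (Suc k)) s) ((\<lambda>(i,k). G i (Suc k)) t)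
            = ip (Suc M') ((\<lambda>(i,k). G i k) s) ((\<lambda>(i,k). G i k) t)" if "s \<in> S" "t \<in> S" for s t
    using that T unfolding S_def by (auto split: prod.splits)
  obtain f \<mu> where fnz: "\<exists>r<Suc M'. f r \<noteq> 0" and mu1: "cmod \<mu> = 1"
    and rel: "\<forall>s\<in>S. ip (Suc M') ((\<lambda>(i,k). G i (Suc k)) s) f = \<mu> * ip (Suc M') ((\<lambda>(i,k). G i k) s) f"
    using key[where S=S and M="Suc M'" and g="\<lambda>(i,k). G i k" and h="\<lambda>(i,k). G i (Suc k)", OF finS _ gram]
    by auto
  have mucnj: "\<mu> * cnj \<mu> = 1"
    using mu1 by (metis cnj_self mult.commute of_real_1 power_one)
  have pow: "ip (Suc M') (G i k) f = \<mu> ^ k * ip (Suc M') (G i 0) f" if "i < p" "k < n" for i k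
    using that(2)
  proof (induction k)
    case 0 then show ?case by simp
  next
    case (Suc k)
    then have "(i, k) \<in> S" using that(1) unfolding S_def by simp
    then have "ip (Suc M') (G i (Suc k)) f = \<mu> * ip (Suc M') (G i k) f" using rel by auto
    then show ?case using Suc by simp
  qed
  define nf where "nf = sqrt (\<Sum>r<Suc M'. (cmod (f r))\<^sup>2)"
  have nfpos: "0 < nf"
  proof -
    obtain r where r: "r < Suc M'" "f r \<noteq> 0" using fnz by blast
    have "0 < (cmod (f r))\<^sup>2" using r by simp
    also have "\<dots> \<le> (\<Sum>r<Suc M'. (cmod (f r))\<^sup>2)"
      using r by (intro member_le_sum) auto
    finally show ?thesis unfolding nf_def by simp
  qed
  have ipff: "ip (Suc M') f f = of_real (nf * nf)"
    unfolding ip_self nf_def by (simp add: sum_nonneg)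
  define \<omega> where "\<omega> = (if f M' = 0 then 1 else cnj (f M') / of_real (cmod (f M')))"
  have om1: "cnj \<omega> * \<omega> = 1"
  proof (cases "f M' = 0")
    case True then show ?thesis unfolding \<omega>_def by simp
  next
    case False
    have e: "f M' * cnj (f M') = of_real (cmod (f M')) * of_real (cmod (f M'))"
      by (metis cnj_self mult.commute of_real_mult power2_eq_square)
    show ?thesis unfolding \<omega>_def using False e by (simp add: field_simps)
  qed
  have omf: "\<omega> * f M' = of_real (cmod (f M'))"
  proof (cases "f M' = 0")
    case True then show ?thesis unfolding \<omega>_def by simp
  next
    case False
    have "\<omega> * f M' = (cnj (f M') * f M') / of_real (cmod (f M'))" using False by (simp add: \<omega>_def)
    also have "\<dots> = of_real ((cmod (f M'))\<^sup>2) / of_real (cmod (f M'))" by (simp only: cnj_self)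
    also have "\<dots> = of_real (cmod (f M'))" using False by (simp add: power2_eq_square)
    finally show ?thesis .
  qed
  define c where "c = \<omega> / of_real nf"
  define fh where "fh r = c * f r" for r
  have fh1: "ip (Suc M') fh fh = 1"
  proof -
    have "ip (Suc M') fh fh = cnj c * c * ip (Suc M') f f"
      unfolding fh_def ip_scale_left ip_scale_right by simp
    also have "\<dots> = (cnj \<omega> * \<omega>) * (of_real (nf * nf) / of_real (nf * nf))"
      unfolding c_def ipff by (simp add: field_simps)
    also have "\<dots> = 1" using om1 nfpos by simp
    finally show ?thesis .
  qed
  have fhM: "fh M' = of_real (cmod (f M') / nf)"
    unfolding fh_def c_def using omf by (simp add: field_simps)
  have ipfh: "ip (Suc M') x fh = c * ip (Suc M') x f" for x
    unfolding fh_def ip_scale_right ..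
  define u where "u = (\<lambda>r. (if r = M' then 1 else 0) - fh r)"
  define \<alpha> where "\<alpha> = 2 / ip (Suc M') u u"
  define Q where "Q x = (\<lambda>r. x r - \<alpha> * u r * ip (Suc M') u x)" for x
  have Qiso: "ip (Suc M') (Q x) (Q y) = ip (Suc M') x y" for x y
    using householder(1)[OF fh1 fhM] unfolding Q_def u_def \<alpha>_def .
  have QM: "Q x M' = ip (Suc M') fh x" for x
    using householder(2)[OF fh1 fhM] unfolding Q_def u_def \<alpha>_def .
  define G' where "G' i k = Q (G i k)" for i k
  define \<beta> where "\<beta> i = ip (Suc M') (G i 0) fh" for i
  have ipb: "ip (Suc M') (G i k) fh = \<mu> ^ k * \<beta> i" if "i < p" "k < n" for i k
    unfolding ipfh \<beta>_def pow[OF that] by simp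
  have dec: "ip (Suc M') (G i k) (G j l) = ip M' (G' i k) (G' j l) + (\<beta> i * cnj (\<beta> j)) * (\<mu> ^ k * cnj \<mu> ^ l)"
    if "i < p" "j < p" "k < n" "l < n" for i j k l
  proof -
    have "ip (Suc M') (G i k) (G j l) = ip (Suc M') (G' i k) (G' j l)"
      unfolding G'_def Qiso ..
    also have "\<dots> = ip M' (G' i k) (G' j l) + cnj (ip (Suc M') fh (G i k)) * ip (Suc M') fh (G j l)"
      unfolding ip_Suc G'_def QM ..
    also have "cnj (ip (Suc M') fh (G i k)) = \<mu> ^ k * \<beta> i"
      unfolding ip_cnj ipb[OF that(1,3)] ..
    also have "ip (Suc M') fh (G j l) = cnj (\<mu> ^ l * \<beta> j)"
      unfolding ipb[OF that(2,4), symmetric] ip_cnj ..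
    finally show ?thesis by (simp add: mult_ac)
  qed
  have T': "\<forall>i<p. \<forall>j<p. \<forall>k l. Suc k < n \<longrightarrow> Suc l < n \<longrightarrow>
            ip M' (G' i (Suc k)) (G' j (Suc l)) = ip M' (G' i k) (G' j l)"
  proof (intro allI impI)
    fix i j k l assume ij: "i < p" "j < p" and kl: "Suc k < n" "Suc l < n"
    have e1: "\<mu> ^ Suc k * cnj \<mu> ^ Suc l = \<mu> ^ k * cnj \<mu> ^ l"
    proof -
      have "\<mu> ^ Suc k * cnj \<mu> ^ Suc l = (\<mu> * cnj \<mu>) * (\<mu> ^ k * cnj \<mu> ^ l)" by (simp add: mult_ac)
      then show ?thesis using mucnj by simp
    qed
    have "ip (Suc M') (G i (Suc k)) (G j (Suc l)) = ip (Suc M') (G i k) (G j l)"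
      using T ij kl by blast
    moreover have "ip (Suc M') (G i (Suc k)) (G j (Suc l)) = ip M' (G' i (Suc k)) (G' j (Suc l))
        + (\<beta> i * cnj (\<beta> j)) * (\<mu> ^ k * cnj \<mu> ^ l)"
      using dec[OF ij kl] unfolding e1 .
    moreover have "ip (Suc M') (G i k) (G j l) = ip M' (G' i k) (G' j l)
        + (\<beta> i * cnj (\<beta> j)) * (\<mu> ^ k * cnj \<mu> ^ l)"
      using dec[OF ij, of k l] kl by simp
    ultimately show "ip M' (G' i (Suc k)) (G' j (Suc l)) = ip M' (G' i k) (G' j l)"
      by simp
  qed
  have IH: "Im (\<Sum>i<p. \<Sum>j<p. cinner (h i) (\<phi> (gm M' n (G' i) (G' j)) (h j))) = 0
   \<and> 0 \<le> Re (\<Sum>i<p. \<Sum>j<p. cinner (h i) (\<phi> (gm M' n (G' i) (G' j)) (h j)))"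
    using Suc.IH[OF T'] .
  define Bm where "Bm = mat n n (\<lambda>(k,l). \<mu> ^ k * cnj \<mu> ^ l)"
  have Bmc: "Bm \<in> carrier_mat n n" unfolding Bm_def by simp
  have meq: "gm (Suc M') n (G i) (G j) = gm M' n (G' i) (G' j) + (\<beta> i * cnj (\<beta> j)) \<cdot>\<^sub>m Bm"
    if "i < p" "j < p" for i j
    by (rule eq_matI) (auto simp: gm_def Bm_def dec[OF that])
  have trm: "cinner (h i) (\<phi> (gm (Suc M') n (G i) (G j)) (h j))
     = cinner (h i) (\<phi> (gm M' n (G' i) (G' j)) (h j)) + (\<beta> i * cnj (\<beta> j)) * cinner (h i) (\<phi> Bm (h j))"
    if "i < p" "j < p" for i j
    unfolding meq[OF that] lin_add[OF lin gm_carrier smult_carrier_mat[OF Bmc]]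
      lin_smult[OF lin Bmc] cinner_add_right cinner_scaleC_right ..
  have "(\<Sum>i<p. \<Sum>j<p. cinner (h i) (\<phi> (gm (Suc M') n (G i) (G j)) (h j)))
     = (\<Sum>i<p. \<Sum>j<p. cinner (h i) (\<phi> (gm M' n (G' i) (G' j)) (h j)))
     + (\<Sum>i<p. \<Sum>j<p. (\<beta> i * cnj (\<beta> j)) * cinner (h i) (\<phi> Bm (h j)))"
    by (simp add: trm sum.distrib)
  moreover have "Im (\<Sum>i<p. \<Sum>j<p. (\<beta> i * cnj (\<beta> j)) * cinner (h i) (\<phi> Bm (h j))) = 0
       \<and> 0 \<le> Re (\<Sum>i<p. \<Sum>j<p. (\<beta> i * cnj (\<beta> j)) * cinner (h i) (\<phi> Bm (h j)))"
    using rank1_pos[OF lin pos] unfolding Bm_def by blast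
  ultimately show ?case using IH by simp
qed

lemma idx_bound: "i < p \<Longrightarrow> k < n \<Longrightarrow> i * n + k < p * (n::nat)"
proof -
  assume "i < p" "k < n"
  then have "Suc i * n \<le> p * n" by (intro mult_le_mono1) simp
  then show ?thesis using \<open>k < n\<close> by simp
qed

theorem theorem5p1:
  fixes n :: nat and \<phi> :: "complex mat \<Rightarrow> 'a::chilbert \<Rightarrow> 'a"
  assumes "linear_map_to_BH n \<phi>"
    and "positive_map n \<phi>"
  shows "\<forall>p :: nat. \<forall>X :: nat \<Rightarrow> nat \<Rightarrow> complex mat.
           (\<forall>i<p. \<forall>j<p. toeplitz_mat n (X i j)) \<and> psd_mat (p * n) (block_mat p n X) \<longrightarrow>
           (\<forall>h :: nat \<Rightarrow> 'a.
              Im (\<Sum>i<p. \<Sum>j<p. cinner (h i) (\<phi> (X i j) (h j))) = 0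
            \<and> Re (\<Sum>i<p. \<Sum>j<p. cinner (h i) (\<phi> (X i j) (h j))) \<ge> 0)"
proof (intro allI impI)
  fix p :: nat and X :: "nat \<Rightarrow> nat \<Rightarrow> complex mat" and h :: "nat \<Rightarrow> 'a"
  assume H: "(\<forall>i<p. \<forall>j<p. toeplitz_mat n (X i j)) \<and> psd_mat (p * n) (block_mat p n X)"
  define A where "A a b = block_mat p n X $$ (a, b)" for a b
  have psd: "psdf (p * n) A"
    unfolding psdf_def
  proof (intro conjI allI impI)
    fix k l assume "k < p * n" "l < p * n"
    then show "A l k = cnj (A k l)" using H unfolding psd_mat_def A_def by blast
  next
    fix v
    have "0 \<le> Re (\<Sum>k<p * n. \<Sum>l<p * n. cnj (v k) * block_mat p n X $$ (k, l) * v l)"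
      using H unfolding psd_mat_def by blast
    then show "0 \<le> Re (qf (p * n) A v)" unfolding qf_def A_def .
  qed
  obtain M g where g: "\<forall>a<p * n. \<forall>b<p * n. A a b = ip M (g a) (g b)"
    using gram_exists[OF psd] by blast
  define G where "G i k = g (i * n + k)" for i k
  have ent: "X i j $$ (k, l) = ip M (G i k) (G j l)" if "i < p" "j < p" "k < n" "l < n" for i j k l
  proof -
    have b1: "i * n + k < p * n" "j * n + l < p * n" using idx_bound that by auto
    have "A (i * n + k) (j * n + l) = X i j $$ (k, l)"
      unfolding A_def block_mat_def using b1 that by simp
    then show ?thesis using g b1 unfolding G_def by simp
  qed
  have Xeq: "X i j = gm M n (G i) (G j)" if "i < p" "j < p" for i j
  proof (rule eq_matI)
    have "X i j \<in> carrier_mat n n" using H that unfolding toeplitz_mat_def by blast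
    then show "dim_row (X i j) = dim_row (gm M n (G i) (G j))" "dim_col (X i j) = dim_col (gm M n (G i) (G j))"
      by (auto simp: gm_def)
    fix k l assume "k < dim_row (gm M n (G i) (G j))" "l < dim_col (gm M n (G i) (G j))"
    then have "k < n" "l < n" by (auto simp: gm_def)
    then show "X i j $$ (k, l) = gm M n (G i) (G j) $$ (k, l)"
      using ent[OF that] by (simp add: gm_def)
  qed
  have T: "\<forall>i<p. \<forall>j<p. \<forall>k l. Suc k < n \<longrightarrow> Suc l < n \<longrightarrow>
            ip M (G i (Suc k)) (G j (Suc l)) = ip M (G i k) (G j l)"
  proof (intro allI impI)
    fix i j k l assume ij: "i < p" "j < p" and kl: "Suc k < n" "Suc l < n"
    obtain \<tau> where tau: "\<forall>k<n. \<forall>l<n. X i j $$ (k, l) = \<tau> (int k - int l)"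
      using H ij unfolding toeplitz_mat_def by blast
    have "X i j $$ (Suc k, Suc l) = X i j $$ (k, l)" using tau kl by simp
    then show "ip M (G i (Suc k)) (G j (Suc l)) = ip M (G i k) (G j l)"
      using ent[OF ij kl] ent[OF ij, of k l] kl by simp
  qed
  have eqsum: "(\<Sum>i<p. \<Sum>j<p. cinner (h i) (\<phi> (X i j) (h j)))
      = (\<Sum>i<p. \<Sum>j<p. cinner (h i) (\<phi> (gm M n (G i) (G j)) (h j)))"
    by (intro sum.cong refl) (simp add: Xeq)
  show "Im (\<Sum>i<p. \<Sum>j<p. cinner (h i) (\<phi> (X i j) (h j))) = 0
      \<and> Re (\<Sum>i<p. \<Sum>j<p. cinner (h i) (\<phi> (X i j) (h j))) \<ge> 0"
    unfolding eqsum using main_ind[OF assms T] by blast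
qed

end
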